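(* Let $q$ be odd with $q\equiv-1\pmod3$, and let $\mu\in\mathbb{F}_q$ be a non-square. Let $L_c$ be the line through $\mathbf{P}(1,0,0,1)$ and $\mathbf{P}(0,0,1,0)$, and $\ell_\mu$ the line through $\mathbf{P}(0,\mu,0,1)$ and $\mathbf{P}(1,0,1,0)$. Then $L_c$ and $\ell_\mu$ belong to the same orbit of $G_q$ if and only if $\mu=-1/3$ and $q\equiv-1\pmod{12}$.
   Context: Points of $\mathrm{PG}(3,q)$ are written $\mathbf{P}(x_0,x_1,x_2,x_3)$ over $\mathbb{F}_q$. The twisted cubic is $\mathscr{C}=\{\mathbf{P}(t^3,t^2,t,1):t\in\mathbb{F}_q\}\cup\{\mathbf{P}(1,0,0,0)\}$ and $G_q$ is the group of projectivities of $\mathrm{PG}(3,q)$ fixing $\mathscr{C}$. Two lines are in the same orbit if an element of $G_q$ maps one onto the other. *)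

theory Defs
  imports "HOL-Analysis.Analysis"
begin

text \<open>Homogeneous coordinates (x0,x1,x2,x3) of PG(3,q) as vectors in 'a^4.\<close>
definition vec4 :: "'a::zero \<Rightarrow> 'a \<Rightarrow> 'a \<Rightarrow> 'a \<Rightarrow> 'a ^ 4" where
  "vec4 a b c d = vector [a, b, c, d]"

text \<open>The projective point P(v): the set of nonzero scalar multiples of v (v nonzero).\<close>
definition proj_pt :: "'a::field ^ 4 \<Rightarrow> ('a ^ 4) set" where
  "proj_pt v = {c *s v | c. c \<noteq> 0}"

definition PPt :: "'a::field \<Rightarrow> 'a \<Rightarrow> 'a \<Rightarrow> 'a \<Rightarrow> ('a ^ 4) set" where
  "PPt a b c d = proj_pt (vec4 a b c d)"

text \<open>The line through two (distinct) points P(u), P(v), as a set of points.\<close>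
definition proj_line :: "'a::field ^ 4 \<Rightarrow> 'a ^ 4 \<Rightarrow> ('a ^ 4) set set" where
  "proj_line u v = {proj_pt (a *s u + b *s v) | a b. a \<noteq> 0 \<or> b \<noteq> 0}"

text \<open>The projectivity induced by a matrix A, acting on a set of points.\<close>
definition proj_act :: "'a::field ^ 4 ^ 4 \<Rightarrow> ('a ^ 4) set set \<Rightarrow> ('a ^ 4) set set" where
  "proj_act A S = (\<lambda>P. (\<lambda>x. A *v x) ` P) ` S"

text \<open>The twisted cubic.\<close>
definition twisted_cubic :: "('a::field ^ 4) set set" where
  "twisted_cubic = {PPt (t^3) (t^2) t 1 | t. True} \<union> {PPt 1 0 0 0}"

text \<open>G_q: projectivities (invertible matrices) preserving the twisted cubic.\<close>
definition Gq :: "('a::field ^ 4 ^ 4) set" where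
  "Gq = {A. invertible A \<and> proj_act A twisted_cubic = twisted_cubic}"

definition same_orbit :: "('a::field ^ 4) set set \<Rightarrow> ('a ^ 4) set set \<Rightarrow> bool" where
  "same_orbit L M \<longleftrightarrow> (\<exists>A \<in> Gq. proj_act A L = M)"

end

theory Submission
  imports Defs "HOL-Computational_Algebra.Polynomial"
begin

(* ---- part T2 ---- *)
lemma card_of_nat_zero: "of_nat CARD('a) = (0::'a::{finite,field})"
proof -
  have s: "(\<lambda>x::'a. x+1) ` UNIV = UNIV"
    by (auto intro: image_eqI[where x="x - 1" for x])
  have "(\<Sum>x\<in>UNIV. x) = (\<Sum>x\<in>(\<lambda>x::'a. x+1) ` UNIV. x)" by (simp add: s)
  also have "\<dots> = (\<Sum>x\<in>UNIV. x + 1)"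
    by (subst sum.reindex) (auto simp: inj_on_def)
  also have "\<dots> = (\<Sum>x\<in>UNIV. x) + of_nat CARD('a)"
    by (simp add: sum.distrib)
  finally show ?thesis by simp
qed

lemma fermat_ff:
  fixes x :: "'a::{finite,field}"
  assumes "x \<noteq> 0"
  shows "x ^ (CARD('a) - 1) = 1"
proof -
  define U where "U = (UNIV::'a set) - {0}"
  have cU: "card U = CARD('a) - 1" unfolding U_def
    by (simp add: card_Diff_singleton)
  have img: "(\<lambda>y. x*y) ` U = U" unfolding U_def using assms
    by (auto intro!: image_eqI[where x="y / x" for y])
  have "prod id U = prod id ((\<lambda>y. x*y) ` U)" by (simp add: img)
  also have "\<dots> = (\<Prod>y\<in>U. x*y)"
    using assms by (subst prod.reindex) (auto simp: inj_on_def)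
  also have "\<dots> = x ^ card U * prod id U"
    by (simp add: prod.distrib)
  finally have "prod id U = x ^ card U * prod id U" .
  moreover have "prod id U \<noteq> 0" unfolding U_def by (simp add: prod_zero_iff)
  ultimately show ?thesis using cU by simp
qed

(* ---- part T3 ---- *)
lemma two_ne_zero_ff:
  assumes "odd CARD('a::{finite,field})" shows "(2::'a) \<noteq> 0"
proof
  assume h: "(2::'a) = 0"
  obtain j where j: "CARD('a) = 2*j+1" using assms oddE by blast
  have "(of_nat CARD('a)::'a) = of_nat (2*j) + 1" using j by simp
  also have "\<dots> = 2 * of_nat j + 1" by simp
  also have "\<dots> = 1" using h by simp
  finally show False using card_of_nat_zero[where 'a='a] by simp
qed

lemma three_ne_zero_ff:
  assumes "CARD('a::{finite,field}) mod 3 = 2" "odd CARD('a)" shows "(3::'a) \<noteq> 0"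
proof
  assume h: "(3::'a) = 0"
  have "CARD('a) = 3*(CARD('a) div 3)+2" using assms(1) div_mult_mod_eq[of "CARD('a)" 3] by linarith
  then obtain j where j: "CARD('a) = 3*j+2" by blast
  have "(of_nat CARD('a)::'a) = 3 * of_nat j + 2" using j by simp
  also have "\<dots> = 2" using h by simp
  finally show False using card_of_nat_zero[where 'a='a] two_ne_zero_ff[OF assms(2)] by simp
qed

lemma cube_root_ff:
  assumes "CARD('a::{finite,field}) mod 3 = 2"
  shows "\<exists>y::'a. y^3 = x"
proof -
  have inj: "inj (\<lambda>y::'a. y^3)"
  proof (rule injI)
    fix u v :: 'a assume e: "u^3 = v^3"
    show "u = v"
    proof (cases "v = 0")
      case True then show ?thesis using e by simp
    next
      case False
      define z where "z = u / v"
      have z3: "z^3 = 1" using e False by (simp add: z_def power_divide)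
      have "CARD('a) - 1 = 3*(CARD('a) div 3)+1" using assms div_mult_mod_eq[of "CARD('a)" 3] by linarith
      then obtain j where j: "CARD('a) - 1 = 3*j+1" by blast
      have "z \<noteq> 0" using z3 by auto
      then have "z ^ (CARD('a) - 1) = 1" by (rule fermat_ff)
      moreover have "z ^ (CARD('a) - 1) = (z^3)^j * z" unfolding j by (simp add: power_mult power_add)
      ultimately have "(z^3)^j * z = 1" by simp
      then have "z = 1" using z3 by simp
      then show ?thesis using False by (simp add: z_def)
    qed
  qed
  then have "surj (\<lambda>y::'a. y^3)" by (simp add: finite_UNIV_inj_surj)
  then have "x \<in> range (\<lambda>y::'a. y^3)" by simp
  then obtain y where "x = y^3" by (rule rangeE)
  then show ?thesis by (intro exI[of _ y]) simp
qed

lemma one_ne_neg_one: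
  assumes oddq: "odd CARD('a::{finite,field})"
  shows "(1::'a) \<noteq> -1"
  proof
    assume h: "(1::'a) = -1"
    have "(2::'a) = 1 + 1" by simp
    also have "\<dots> = 1 + (-1)" using h by (rule arg_cong[where f="\<lambda>u. 1 + u"])
    also have "\<dots> = 0" by simp
    finally show False using two_ne_zero_ff[OF oddq] by simp
  qed

lemma sq_fiber:
  fixes z :: "'a::field"
  assumes "(2::'a) \<noteq> 0" "z \<noteq> 0"
  shows "card {x. x \<in> UNIV - {0} \<and> x^2 = z^2} = 2"
proof -
  have "x \<in> {x. x \<in> UNIV - {0} \<and> x^2 = z^2} \<longleftrightarrow> x \<in> {z, -z}" for x
  proof -
    have e: "x^2 = z^2 \<longleftrightarrow> x = z \<or> x = -z" by (rule power2_eq_iff)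
    have "x = -z \<Longrightarrow> x \<noteq> 0" using assms(2) by simp
    then show ?thesis using e assms(2) by blast
  qed
  then have "{x. x \<in> UNIV - {0} \<and> x^2 = z^2} = {z, -z}" by (rule set_eqI)
  moreover have "z \<noteq> -z"
  proof
    assume h: "z = -z"
    have "2*z = z + z" by (rule mult_2)
    also have "\<dots> = z + (-z)" using h by (rule arg_cong[where f="\<lambda>u. z + u"])
    also have "\<dots> = 0" by simp
    finally show False using assms by simp
  qed
  ultimately show ?thesis by simp
qed


lemma two_mm:
  assumes oddq: "odd CARD('a::{finite,field})"
  shows "2 * ((CARD('a) - 1) div 2) = CARD('a) - 1"
proof -
  obtain k where "CARD('a) = 2*k+1" using oddq by (auto elim: oddE)
  then show ?thesis by simp
qed

lemma sq_pow_one: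
  assumes oddq: "odd CARD('a::{finite,field})"
  shows "(y::'a) \<noteq> 0 \<Longrightarrow> (y^2)^((CARD('a) - 1) div 2) = 1"
proof -
  assume y: "y \<noteq> 0"
  have "(y^2)^((CARD('a) - 1) div 2) = y^(2*((CARD('a) - 1) div 2))" by (simp add: power_mult)
  also have "\<dots> = y^(CARD('a) - 1)" using two_mm[OF oddq] by simp
  also have "\<dots> = 1" using y by (rule fermat_ff)
  finally show ?thesis .
qed

lemma card_sq:
  assumes oddq: "odd CARD('a::{finite,field})"
  shows "card ((\<lambda>x::'a. x^2) ` (UNIV - {0})) = ((CARD('a) - 1) div 2)"
proof -
  let ?U = "(UNIV::'a set) - {0}"
  have "card ?U = (\<Sum>x\<in>?U. 1)" by simp
  also have "\<dots> = (\<Sum>y\<in>(\<lambda>x. x^2) ` ?U. (\<Sum>x\<in>{x. x \<in> ?U \<and> x^2 = y}. 1))"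
    by (rule sum.image_gen) simp
  also have "\<dots> = (\<Sum>y\<in>(\<lambda>x. x^2) ` ?U. 2)"
  proof (rule sum.cong[OF refl])
    fix y assume "y \<in> (\<lambda>x::'a. x^2) ` ?U"
    then obtain z where "z \<in> ?U" "y = z^2" by auto
    then show "(\<Sum>x\<in>{x. x \<in> ?U \<and> x^2 = y}. 1) = (2::nat)"
      using sq_fiber[of z] two_ne_zero_ff[OF oddq] by simp
  qed
  also have "\<dots> = 2 * card ((\<lambda>x::'a. x^2) ` ?U)" by simp
  finally have "card ?U = 2 * card ((\<lambda>x::'a. x^2) ` ?U)" .
  moreover have "card ?U = CARD('a) - 1" by (simp add: card_Diff_singleton)
  ultimately show ?thesis using two_mm[OF oddq] by simp
qed

lemma mm_pos:
  assumes oddq: "odd CARD('a::{finite,field})"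
  shows "((CARD('a) - 1) div 2) \<ge> 1"
proof -
  have "(1::'a) \<in> (\<lambda>x::'a. x^2) ` (UNIV - {0})" by (auto intro: image_eqI[where x=1])
  then have "card ((\<lambda>x::'a. x^2) ` (UNIV - {0})) \<noteq> 0"
    by (metis card_0_eq empty_iff finite)
  then show ?thesis using card_sq[OF oddq] by simp
qed

lemma roots_eq:
  assumes oddq: "odd CARD('a::{finite,field})"
  shows "{x::'a. x^((CARD('a) - 1) div 2) = 1} = (\<lambda>x::'a. x^2) ` (UNIV - {0})"
proof -
  define p where "p = (monom (1::'a) ((CARD('a) - 1) div 2) - 1)"
  have pe: "poly p x = x^((CARD('a) - 1) div 2) - 1" for x by (simp add: p_def poly_monom)
  have "p \<noteq> 0" proof assume "p = 0" then have "poly p 0 = 0" by simp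
    then show False using pe[of 0] mm_pos[OF oddq] by (simp add: power_0_left) qed
  have dp: "degree p \<le> ((CARD('a) - 1) div 2)" unfolding p_def
    using degree_diff_le_max[of "monom (1::'a) ((CARD('a) - 1) div 2)" 1] by (simp add: degree_monom_eq)
  have "{x::'a. x^((CARD('a) - 1) div 2) = 1} = {x. poly p x = 0}" by (simp add: pe)
  then have c1: "card {x::'a. x^((CARD('a) - 1) div 2) = 1} \<le> ((CARD('a) - 1) div 2)" using card_poly_roots_bound[OF \<open>p\<noteq>0\<close>] dp by simp
  have sub: "(\<lambda>x::'a. x^2) ` (UNIV - {0}) \<subseteq> {x::'a. x^((CARD('a) - 1) div 2) = 1}" using sq_pow_one[OF oddq] by auto
  show ?thesis using card_seteq[OF _ sub] c1 card_sq[OF oddq] by simp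
qed

lemma euler_nonsq:
  assumes oddq: "odd CARD('a::{finite,field})"
  and "\<not> (\<exists>y::'a. y^2 = x)" shows "x^((CARD('a) - 1) div 2) = -1"
proof -
  have x0: "x \<noteq> 0"
  proof
    assume "x = 0" then have "0^2 = x" by simp
    with assms(2) show False by blast
  qed
  have "x \<notin> (\<lambda>x::'a. x^2) ` (UNIV - {0})" using assms by auto
  then have n1: "x^((CARD('a) - 1) div 2) \<noteq> 1" by (subst (asm) roots_eq[OF oddq, symmetric]) simp
  have "(x^((CARD('a) - 1) div 2))^2 = x^(((CARD('a) - 1) div 2) * 2)" by (rule power_mult[symmetric])
  also have "\<dots> = x^(CARD('a) - 1)" using two_mm[OF oddq] by (simp add: mult.commute)
  also have "\<dots> = 1" using x0 by (rule fermat_ff)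
  finally have "(x^((CARD('a) - 1) div 2))^2 = 1" .
  then show ?thesis using n1 by (simp add: power2_eq_1_iff)
qed

lemma nonsq_mult:
  assumes oddq: "odd CARD('a::{finite,field})"
  and "\<not> (\<exists>y::'a. y^2 = x)" "\<not> (\<exists>y::'a. y^2 = z)"
  shows "\<exists>y. y^2 = x * z"
proof -
  have "(x*z)^((CARD('a) - 1) div 2) = 1" using euler_nonsq[OF oddq assms(2)] euler_nonsq[OF oddq assms(3)]
    by (simp add: power_mult_distrib)
  then have "x*z \<in> (\<lambda>x::'a. x^2) ` (UNIV - {0})" by (subst roots_eq[OF oddq, symmetric]) simp
  then obtain y where "x*z = y^2" "y \<in> UNIV - {0}" by (rule imageE)
  then show ?thesis by (intro exI[of _ y]) simp
qed

lemma neg1_nonsq_mod4: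
  assumes oddq: "odd CARD('a::{finite,field})"
  and "\<not> (\<exists>y::'a. y^2 = -1)" shows "CARD('a) mod 4 = 3"
proof -
  have e: "(-1::'a)^((CARD('a) - 1) div 2) = -1" by (rule euler_nonsq[OF oddq assms(2)])
  have "odd ((CARD('a) - 1) div 2)"
  proof (rule ccontr)
    assume "\<not> odd ((CARD('a) - 1) div 2)"
    then obtain n where "(CARD('a) - 1) div 2 = 2*n" by (auto elim: evenE)
    then have "(-1::'a)^((CARD('a) - 1) div 2) = 1" by simp
    then show False using e one_ne_neg_one[OF oddq] by simp
  qed
  then obtain k where k: "(CARD('a) - 1) div 2 = 2*k+1" by (auto elim: oddE)
  have "CARD('a) \<ge> 1" by (simp add: Suc_leI)
  then have "CARD('a) = 4*k+3" using two_mm[OF oddq] k by linarith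
  then show ?thesis by simp
qed

lemma mod4_neg1_nonsq:
  assumes oddq: "odd CARD('a::{finite,field})"
  and "CARD('a) mod 4 = 3" shows "\<not> (\<exists>y::'a. y^2 = -1)"
proof
  assume "\<exists>y::'a. y^2 = -1"
  then obtain y :: 'a where y: "y^2 = -1" by blast
  then have "y \<noteq> 0" by auto
  then have e: "(-1::'a)^((CARD('a) - 1) div 2) = 1" using sq_pow_one[OF oddq, of y] y by simp
  have c4: "CARD('a) = 4*(CARD('a) div 4) + 3" using assms(2) by (metis div_mult_mod_eq mult.commute)
  have "(CARD('a) - 1) div 2 = 2*(CARD('a) div 4)+1" using two_mm[OF oddq] c4 by linarith
  then obtain n where "(CARD('a) - 1) div 2 = 2*n+1" by blast
  then have "(-1::'a)^((CARD('a) - 1) div 2) = -1" by simp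
  then show False using e one_ne_neg_one[OF oddq] by simp
qed

(* ---- part T4 ---- *)
lemma vec4_nth [simp]:
  "vec4 a b c d $ 1 = a" "vec4 a b c d $ 2 = b" "vec4 a b c d $ 3 = c" "vec4 a b c d $ 4 = d"
  unfolding vec4_def vector_def by simp_all

lemma vec4_eq_iff: "(x::'a::zero^4) = vec4 a b c d \<longleftrightarrow> x$1 = a \<and> x$2 = b \<and> x$3 = c \<and> x$4 = d"
  by (auto simp: vec_eq_iff forall_4)

lemma mv4: "((A::'a::semiring_1^4^'m) *v x) $ i = A$i$1 * x$1 + A$i$2 * x$2 + A$i$3 * x$3 + A$i$4 * x$4"
  by (simp add: matrix_vector_mult_def sum_4)

lemma mm4: "((A::'a::semiring_1^4^'m) ** (B::'a^'n^4)) $ i $ j = A$i$1 * B$1$j + A$i$2 * B$2$j + A$i$3 * B$3$j + A$i$4 * B$4$j"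
  by (simp add: matrix_matrix_mult_def sum_4)

definition wv :: "'a::comm_ring_1 \<Rightarrow> 'a \<Rightarrow> 'a^4" where
  "wv x y = vec4 (x^3) (x^2*y) (x*y^2) (y^3)"

definition Mb :: "'a::comm_ring_1 \<Rightarrow> 'a \<Rightarrow> 'a \<Rightarrow> 'a \<Rightarrow> 'a^4^4" where
  "Mb a b c d = vec4 (vec4 (a^3) (3*a^2*b) (3*a*b^2) (b^3))
                     (vec4 (a^2*c) (a^2*d + 2*a*b*c) (2*a*b*d + b^2*c) (b^2*d))
                     (vec4 (a*c^2) (2*a*c*d + b*c^2) (a*d^2 + 2*b*c*d) (b*d^2))
                     (vec4 (c^3) (3*c^2*d) (3*c*d^2) (d^3))"

lemma Mb_wv: "Mb a b c d *v wv x y = wv (a*x+b*y) (c*x+d*y)"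
  unfolding vec_eq_iff forall_4 mv4 by (simp add: Mb_def wv_def) (simp add: power2_eq_square power3_eq_cube algebra_simps)

lemma Mb_mult: "Mb a b c d ** Mb a' b' c' d' = Mb (a*a'+b*c') (a*b'+b*d') (c*a'+d*c') (c*b'+d*d')"
  unfolding vec_eq_iff forall_4 mm4 by (simp add: Mb_def) (simp add: power2_eq_square power3_eq_cube algebra_simps)

lemma Mb_id: "Mb 1 0 0 1 = (mat 1 :: 'a::comm_ring_1^4^4)"
  unfolding vec_eq_iff forall_4 by (simp add: Mb_def mat_def)

lemma Mb_scal: "Mb a 0 0 a *v z = a^3 *s z"
  unfolding vec_eq_iff forall_4 mv4 by (simp add: Mb_def power2_eq_square power3_eq_cube algebra_simps)

(* ---- part T5 ---- *)
lemma self_in_proj_pt: "v \<in> proj_pt v"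
  unfolding proj_pt_def by (auto intro: exI[of _ 1])

lemma proj_pt_smult:
  fixes v :: "'a::field^4"
  assumes "c \<noteq> 0" shows "proj_pt (c *s v) = proj_pt v"
  unfolding proj_pt_def
proof (rule set_eqI, rule iffI)
  fix x assume "x \<in> {d *s (c *s v) |d. d \<noteq> 0}"
  then obtain d where "x = d *s (c *s v)" "d \<noteq> 0" by blast
  then show "x \<in> {e *s v |e. e \<noteq> 0}" using assms
    by (auto simp: vector_smult_assoc intro!: exI[of _ "d*c"])
next
  fix x assume "x \<in> {e *s v |e. e \<noteq> 0}"
  then obtain d where "x = d *s v" "d \<noteq> 0" by blast
  then show "x \<in> {d *s (c *s v) |d. d \<noteq> 0}" using assms
    by (auto simp: vector_smult_assoc intro!: exI[of _ "d/c"])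
qed

lemma proj_pt_eqD: "proj_pt u = proj_pt (v::'a::field^4) \<Longrightarrow> \<exists>c. c \<noteq> 0 \<and> u = c *s v"
  using self_in_proj_pt[of u] unfolding proj_pt_def by auto

lemma img_proj_pt: "(\<lambda>x. A *v x) ` proj_pt v = proj_pt ((A::'a::field^4^4) *v v)"
  unfolding proj_pt_def
proof (rule set_eqI, rule iffI)
  fix x assume "x \<in> (*v) A ` {c *s v |c. c \<noteq> 0}"
  then show "x \<in> {c *s (A *v v) |c. c \<noteq> 0}" by (auto simp: vector_scalar_commute)
next
  fix x assume "x \<in> {c *s (A *v v) |c. c \<noteq> 0}"
  then obtain c where "x = c *s (A *v v)" "c \<noteq> 0" by blast
  then have "x = A *v (c *s v)" "c *s v \<in> {c *s v |c. c \<noteq> 0}" by (auto simp: vector_scalar_commute)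
  then show "x \<in> (*v) A ` {c *s v |c. c \<noteq> 0}" by blast
qed

lemma proj_act_line: "proj_act (A::'a::field^4^4) (proj_line u v) = proj_line (A *v u) (A *v v)"
proof -
  have key: "(*v) A ` proj_pt (a *s u + b *s v) = proj_pt (a *s (A *v u) + b *s (A *v v))" for a b
    by (simp add: img_proj_pt vector_scalar_commute matrix_vector_right_distrib)
  show ?thesis unfolding proj_act_def proj_line_def
  proof (rule set_eqI, rule iffI)
    fix Q :: "('a^4) set" assume "Q \<in> (\<lambda>P. (*v) A ` P) ` {proj_pt (a *s u + b *s v) |a b. a \<noteq> 0 \<or> b \<noteq> 0}"
    then obtain a b where "Q = (*v) A ` proj_pt (a *s u + b *s v)" "a \<noteq> 0 \<or> b \<noteq> 0" by blast
    then show "Q \<in> {proj_pt (a *s (A *v u) + b *s (A *v v)) |a b. a \<noteq> 0 \<or> b \<noteq> 0}"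
      using key by blast
  next
    fix Q :: "('a^4) set" assume "Q \<in> {proj_pt (a *s (A *v u) + b *s (A *v v)) |a b. a \<noteq> 0 \<or> b \<noteq> 0}"
    then obtain a b where "Q = proj_pt (a *s (A *v u) + b *s (A *v v))" "a \<noteq> 0 \<or> b \<noteq> 0" by blast
    then show "Q \<in> (\<lambda>P. (*v) A ` P) ` {proj_pt (a *s u + b *s v) |a b. a \<noteq> 0 \<or> b \<noteq> 0}"
      using key[of a b, symmetric] by blast
  qed
qed

lemma wv_t1: "wv t 1 = vec4 (t^3) (t^2) t 1" by (simp add: wv_def)
lemma wv_10: "wv 1 0 = vec4 1 0 0 (0::'a::comm_ring_1)" by (simp add: wv_def)
lemma wv_01: "wv 0 1 = vec4 0 0 0 (1::'a::comm_ring_1)" by (simp add: wv_def)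

lemma wv_scale: "wv (c*x) (c*y) = c^3 *s wv x y"
  unfolding vec_eq_iff forall_4 by (simp add: wv_def power_mult_distrib algebra_simps power2_eq_square power3_eq_cube)

lemma tc_eq: "(twisted_cubic :: ('a::field^4) set set) = {proj_pt (wv x y) | x y. x \<noteq> 0 \<or> y \<noteq> 0}"
proof (rule set_eqI, rule iffI)
  fix P :: "('a^4) set" assume "P \<in> twisted_cubic"
  then show "P \<in> {proj_pt (wv x y) | x y. x \<noteq> 0 \<or> y \<noteq> 0}"
    unfolding twisted_cubic_def PPt_def
  proof (elim UnE CollectE exE conjE)
    fix t assume "P = proj_pt (vec4 (t ^ 3) (t\<^sup>2) t 1)"
    then show ?thesis by (intro CollectI exI[of _ t] exI[of _ 1]) (simp add: wv_t1)
  next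
    assume "P \<in> {proj_pt (vec4 1 0 0 0)}"
    then show ?thesis by (intro CollectI exI[of _ 1] exI[of _ 0]) (simp add: wv_10)
  qed
next
  fix P :: "('a^4) set" assume "P \<in> {proj_pt (wv x y) | x y. x \<noteq> 0 \<or> y \<noteq> 0}"
  then obtain x y where P: "P = proj_pt (wv x y)" and nz: "x \<noteq> 0 \<or> y \<noteq> 0" by blast
  show "P \<in> twisted_cubic"
  proof (cases "y = 0")
    case True
    then have "x \<noteq> 0" using nz by simp
    have "wv x y = x^3 *s wv 1 0" using wv_scale[of x 1 0] True by simp
    then have "P = PPt 1 0 0 0" using P \<open>x\<noteq>0\<close> by (simp add: proj_pt_smult PPt_def wv_10)
    then show ?thesis unfolding twisted_cubic_def by simp
  next
    case False
    have "wv x y = y^3 *s wv (x/y) 1" using wv_scale[of y "x/y" 1] False by simp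
    then have "P = PPt ((x/y)^3) ((x/y)^2) (x/y) 1" using P False by (simp add: proj_pt_smult PPt_def wv_t1)
    then show ?thesis unfolding twisted_cubic_def by blast
  qed
qed

lemma inv_inj: "invertible (A::'a::field^'n^'n) \<Longrightarrow> A *v z = 0 \<Longrightarrow> z = 0"
  by (metis invertible_def matrix_vector_mul_assoc matrix_vector_mul_lid matrix_vector_mult_0_right)

lemma Mb_invertible:
  assumes "a*d - b*c \<noteq> (0::'a::field)"
  shows "invertible (Mb a b c d)"
proof -
  define D where "D = a*d - b*c"
  have D: "D \<noteq> 0" using assms D_def by simp
  have p: "a*(d/D)+b*(-c/D) = 1" "a*(-b/D)+b*(a/D) = 0" "c*(d/D)+d*(-c/D) = 0" "c*(-b/D)+d*(a/D) = 1"
    using D by (simp_all add: field_simps) (simp_all add: D_def algebra_simps)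
  have q: "(d/D)*a+(-b/D)*c = 1" "(d/D)*b+(-b/D)*d = 0" "(-c/D)*a+(a/D)*c = 0" "(-c/D)*b+(a/D)*d = 1"
    using D by (simp_all add: field_simps) (simp_all add: D_def algebra_simps)
  have "Mb a b c d ** Mb (d/D) (-b/D) (-c/D) (a/D) = mat 1"
    by (simp only: Mb_mult p Mb_id)
  moreover have "Mb (d/D) (-b/D) (-c/D) (a/D) ** Mb a b c d = mat 1"
    by (simp only: Mb_mult q Mb_id)
  ultimately show ?thesis unfolding invertible_def by blast
qed

lemma Mb_in_Gq:
  assumes "a*d - b*c \<noteq> (0::'a::field)"
  shows "Mb a b c d \<in> Gq"
proof -
  let ?D = "a*d - b*c"
  have "proj_act (Mb a b c d) twisted_cubic = twisted_cubic"
    unfolding tc_eq proj_act_def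
  proof (rule set_eqI, rule iffI)
    fix Q :: "('a^4) set" assume "Q \<in> (\<lambda>P. (*v) (Mb a b c d) ` P) ` {proj_pt (wv x y) |x y. x \<noteq> 0 \<or> y \<noteq> 0}"
    then obtain x y where Q: "Q = (*v) (Mb a b c d) ` proj_pt (wv x y)" and nz: "x \<noteq> 0 \<or> y \<noteq> 0" by blast
    have "Q = proj_pt (wv (a*x+b*y) (c*x+d*y))" using Q by (simp add: img_proj_pt Mb_wv)
    moreover have "a*x+b*y \<noteq> 0 \<or> c*x+d*y \<noteq> 0"
    proof (rule ccontr)
      assume "\<not> ?thesis"
      then have "a*x+b*y = 0" "c*x+d*y = 0" by auto
      moreover have "?D * x = d*(a*x+b*y) - b*(c*x+d*y)" "?D * y = a*(c*x+d*y) - c*(a*x+b*y)"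
        by (simp_all add: algebra_simps)
      ultimately have "?D * x = 0" "?D * y = 0" by simp_all
      then show False using assms nz by simp
    qed
    ultimately show "Q \<in> {proj_pt (wv x y) |x y. x \<noteq> 0 \<or> y \<noteq> 0}" by blast
  next
    fix Q :: "('a^4) set" assume "Q \<in> {proj_pt (wv x y) |x y. x \<noteq> 0 \<or> y \<noteq> 0}"
    then obtain x y :: 'a where Q: "Q = proj_pt (wv x y)" and nz: "x \<noteq> 0 \<or> y \<noteq> 0" by blast
    define x' where "x' = (d*x - b*y)/?D"
    define y' where "y' = (a*y - c*x)/?D"
    define D where "D = ?D"
    have D: "D \<noteq> 0" using assms D_def by simp
    have e1: "a*x'+b*y' = x" "c*x'+d*y' = y" using D unfolding x'_def y'_def D_def[symmetric]
      by (simp_all add: field_simps) (simp_all add: D_def algebra_simps)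
    have nz': "x' \<noteq> 0 \<or> y' \<noteq> 0" using e1 nz by auto
    have "Q = (*v) (Mb a b c d) ` proj_pt (wv x' y')" using Q e1 by (simp add: img_proj_pt Mb_wv)
    then show "Q \<in> (\<lambda>P. (*v) (Mb a b c d) ` P) ` {proj_pt (wv x y) |x y. x \<noteq> 0 \<or> y \<noteq> 0}"
      using nz' by blast
  qed
  then show ?thesis unfolding Gq_def using Mb_invertible[OF assms] by blast
qed

(* ---- part T6 ---- *)
lemma mult_nz_cancel: "k \<noteq> 0 \<Longrightarrow> k * x = 0 \<Longrightarrow> x = (0::'a::field)" by simp

lemma four_pt:
  fixes c0 c1 c2 c3 :: "'a::field"
  assumes two: "(2::'a) \<noteq> 0" and three: "(3::'a) \<noteq> 0"
  and P: "\<And>t. t \<noteq> 0 \<Longrightarrow> c0 + c1*t + c2*t^2 + c3*t^3 = 0"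
  shows "c0 = 0 \<and> c1 = 0 \<and> c2 = 0 \<and> c3 = 0"
proof -
  have e1: "c0 + c1 + c2 + c3 = 0" using P[of 1] by simp
  have e2: "c0 - c1 + c2 - c3 = 0" using P[of "-1"] by simp
  have e3: "c0 + 2*c1 + 4*c2 + 8*c3 = 0" using P[of 2] two by (simp add: mult.commute)
  have e4: "c0 - 2*c1 + 4*c2 - 8*c3 = 0" using P[of "-2"] two by (simp add: mult.commute)
  have "2*(c0+c2) = (c0 + c1 + c2 + c3) + (c0 - c1 + c2 - c3)" by (simp add: algebra_simps)
  also have "\<dots> = 0" using e1 e2 by simp
  finally have f1: "c0 + c2 = 0" by (rule mult_nz_cancel[OF two])
  have "2*(c0+4*c2) = (c0 + 2*c1 + 4*c2 + 8*c3) + (c0 - 2*c1 + 4*c2 - 8*c3)" by (simp add: algebra_simps)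
  also have "\<dots> = 0" using e3 e4 by simp
  finally have f2: "c0 + 4*c2 = 0" by (rule mult_nz_cancel[OF two])
  have "3*c2 = (c0 + 4*c2) - (c0 + c2)" by (simp add: algebra_simps)
  also have "\<dots> = 0" using f1 f2 by simp
  finally have c2: "c2 = 0" by (rule mult_nz_cancel[OF three])
  have "2*(c1+c3) = (c0 + c1 + c2 + c3) - (c0 - c1 + c2 - c3)" by (simp add: algebra_simps)
  also have "\<dots> = 0" using e1 e2 by simp
  finally have g1: "c1 + c3 = 0" by (rule mult_nz_cancel[OF two])
  have "2*(2*(c1+4*c3)) = (c0 + 2*c1 + 4*c2 + 8*c3) - (c0 - 2*c1 + 4*c2 - 8*c3)" by (simp add: algebra_simps)
  also have "\<dots> = 0" using e3 e4 by simp
  finally have "2*(c1+4*c3) = 0" by (rule mult_nz_cancel[OF two])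
  then have g2: "c1 + 4*c3 = 0" by (rule mult_nz_cancel[OF two])
  have "3*c3 = (c1 + 4*c3) - (c1 + c3)" by (simp add: algebra_simps)
  also have "\<dots> = 0" using g1 g2 by simp
  finally have c3: "c3 = 0" by (rule mult_nz_cancel[OF three])
  show ?thesis using c2 c3 f1 g1 by simp
qed

lemma cone_wv:
  assumes "z = c *s wv x y"
  shows "z$2 * z$4 = (z$3)^2 \<and> z$1 * z$3 = (z$2)^2"
  using assms by (simp add: wv_def power2_eq_square power3_eq_cube algebra_simps)

(* ---- part T7 ---- *)
lemma diag_lemma:
  fixes B :: "'a::field^4^4"
  assumes two: "(2::'a) \<noteq> 0" and three: "(3::'a) \<noteq> 0"
  and inv: "invertible B"
  and e0: "B *v vec4 1 0 0 0 = \<alpha> *s vec4 1 0 0 0"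
  and e3: "B *v vec4 0 0 0 1 = \<delta> *s vec4 0 0 0 1"
  and a0: "\<alpha> \<noteq> 0" and d0: "\<delta> \<noteq> 0"
  and cone: "\<And>t. (B *v vec4 (t^3) (t^2) t 1)$2 * (B *v vec4 (t^3) (t^2) t 1)$4 = ((B *v vec4 (t^3) (t^2) t 1)$3)^2
              \<and> (B *v vec4 (t^3) (t^2) t 1)$1 * (B *v vec4 (t^3) (t^2) t 1)$3 = ((B *v vec4 (t^3) (t^2) t 1)$2)^2"
  shows "\<exists>k. k \<noteq> 0 \<and> (\<forall>z. B *v z = \<delta> *s (Mb k 0 0 1 *v z))"
proof -
  have c1: "B$1$1 = \<alpha>" "B$2$1 = 0" "B$3$1 = 0" "B$4$1 = 0"
    using arg_cong[OF e0, of "\<lambda>v. v$1"] arg_cong[OF e0, of "\<lambda>v. v$2"]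
          arg_cong[OF e0, of "\<lambda>v. v$3"] arg_cong[OF e0, of "\<lambda>v. v$4"] by (simp_all add: mv4)
  have c4: "B$1$4 = 0" "B$2$4 = 0" "B$3$4 = 0" "B$4$4 = \<delta>"
    using arg_cong[OF e3, of "\<lambda>v. v$1"] arg_cong[OF e3, of "\<lambda>v. v$2"]
          arg_cong[OF e3, of "\<lambda>v. v$3"] arg_cong[OF e3, of "\<lambda>v. v$4"] by (simp_all add: mv4)
  define u0 where "u0 = B$1$2"
  define w0 where "w0 = B$1$3"
  define u1 where "u1 = B$2$2"
  define w1 where "w1 = B$2$3"
  define u2 where "u2 = B$3$2"
  define w2 where "w2 = B$3$3"
  define u3 where "u3 = B$4$2"
  define w3 where "w3 = B$4$3"
  have comp: "B *v vec4 (t^3) (t^2) t 1 = vec4 (\<alpha>*t^3 + u0*t^2 + w0*t) (u1*t^2 + w1*t) (u2*t^2 + w2*t) (u3*t^2 + w3*t + \<delta>)" for t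
    unfolding vec4_eq_iff mv4 by (simp add: c1 c4 u0_def w0_def u1_def w1_def u2_def w2_def u3_def w3_def)
  have P1: "w1*\<delta> + (u1*\<delta> + w1*w3 - w2^2)*t + (u1*w3 + w1*u3 - 2*u2*w2)*t^2 + (u1*u3 - u2^2)*t^3 = 0"
    if "t \<noteq> 0" for t
  proof -
    have "(u1*t^2 + w1*t) * (u3*t^2 + w3*t + \<delta>) = (u2*t^2 + w2*t)^2" using cone[of t] comp[of t] by simp
    moreover have "(u1*t^2 + w1*t) * (u3*t^2 + w3*t + \<delta>) - (u2*t^2 + w2*t)^2
       = t * (w1*\<delta> + (u1*\<delta> + w1*w3 - w2^2)*t + (u1*w3 + w1*u3 - 2*u2*w2)*t^2 + (u1*u3 - u2^2)*t^3)"
      by (simp add: power2_eq_square power3_eq_cube algebra_simps)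
    ultimately show ?thesis using that by simp
  qed
  have P2: "(w0*w2 - w1^2) + (u0*w2 + w0*u2 - 2*u1*w1)*t + (\<alpha>*w2 + u0*u2 - u1^2)*t^2 + (\<alpha>*u2)*t^3 = 0"
    if "t \<noteq> 0" for t
  proof -
    have "(\<alpha>*t^3 + u0*t^2 + w0*t) * (u2*t^2 + w2*t) = (u1*t^2 + w1*t)^2" using cone[of t] comp[of t] by simp
    moreover have "(\<alpha>*t^3 + u0*t^2 + w0*t) * (u2*t^2 + w2*t) - (u1*t^2 + w1*t)^2
       = t^2 * ((w0*w2 - w1^2) + (u0*w2 + w0*u2 - 2*u1*w1)*t + (\<alpha>*w2 + u0*u2 - u1^2)*t^2 + (\<alpha>*u2)*t^3)"
      by (simp add: power2_eq_square power3_eq_cube algebra_simps)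
    ultimately show ?thesis using that by simp
  qed
  have Q1: "w1*\<delta> = 0" "u1*\<delta> + w1*w3 - w2^2 = 0" "u1*w3 + w1*u3 - 2*u2*w2 = 0" "u1*u3 - u2^2 = 0"
    using four_pt[OF two three P1] by simp_all
  have Q2: "w0*w2 - w1^2 = 0" "u0*w2 + w0*u2 - 2*u1*w1 = 0" "\<alpha>*w2 + u0*u2 - u1^2 = 0" "\<alpha>*u2 = 0"
    using four_pt[OF two three P2] by simp_all
  have w1: "w1 = 0" using Q1(1) d0 by simp
  have u2: "u2 = 0" using Q2(4) a0 by simp
  have r1: "u1*\<delta> = w2^2" using Q1(2) w1 by simp
  have r2: "\<alpha>*w2 = u1^2" using Q2(3) u2 by simp
  have u1: "u1 \<noteq> 0"
  proof
    assume h: "u1 = 0"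
    then have "w2 = 0" using r1 by simp
    then have row: "B$2$1 = 0" "B$2$2 = 0" "B$2$3 = 0" "B$2$4 = 0"
      using c1 c4 h w1 unfolding u1_def w1_def by simp_all
    obtain B' where "B ** B' = mat 1" using inv unfolding invertible_def by blast
    then have "(B ** B')$2$2 = 1" by (simp add: mat_def)
    then show False using row by (simp add: mm4)
  qed
  have w2: "w2 \<noteq> 0" using r1 u1 d0 by auto
  have u3: "u3 = 0" using Q1(4) u2 u1 by simp
  have w0: "w0 = 0" using Q2(1) w1 w2 by simp
  have u0: "u0 = 0" using Q2(2) w0 u2 w1 w2 by simp
  have w3: "w3 = 0" using Q1(3) w1 u2 u1 by simp
  define k where "k = w2 / \<delta>"
  have k0: "k \<noteq> 0" using w2 d0 by (simp add: k_def)
  have u1k: "u1 = \<delta> * k^2" using r1 d0 by (simp add: k_def power2_eq_square field_simps)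
  have ak: "\<alpha> = \<delta> * k^3"
  proof -
    have "\<alpha> * w2 = \<delta> * k^3 * w2" using r2 u1k d0 by (simp add: k_def power2_eq_square power3_eq_cube field_simps)
    then show ?thesis using w2 by simp
  qed
  have w2k: "w2 = \<delta> * k" using d0 by (simp add: k_def)
  have "B *v z = \<delta> *s (Mb k 0 0 1 *v z)" for z
    unfolding vec_eq_iff forall_4 mv4
    using c1 c4 u0 w0 u1k w1 u2 w2k u3 w3 ak
    unfolding u0_def w0_def u1_def w1_def u2_def w2_def u3_def w3_def
    by (simp add: Mb_def mv4 algebra_simps)
  then show ?thesis using k0 by blast
qed

(* ---- part T8 ---- *)
lemma Gq_onC:
  fixes A :: "'a::field^4^4"
  assumes "A \<in> Gq" "x \<noteq> 0 \<or> y \<noteq> 0"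
  shows "\<exists>c x' y'. c \<noteq> 0 \<and> (x' \<noteq> 0 \<or> y' \<noteq> 0) \<and> A *v wv x y = c *s wv x' y'"
proof -
  have tc: "proj_act A twisted_cubic = twisted_cubic" using assms(1) unfolding Gq_def by blast
  have "proj_pt (wv x y) \<in> twisted_cubic" using assms(2) unfolding tc_eq by blast
  then have "(*v) A ` proj_pt (wv x y) \<in> proj_act A twisted_cubic" unfolding proj_act_def by blast
  then have "proj_pt (A *v wv x y) \<in> twisted_cubic" using tc by (simp add: img_proj_pt)
  then obtain x' y' where "proj_pt (A *v wv x y) = proj_pt (wv x' y')" "x' \<noteq> 0 \<or> y' \<noteq> 0"
    unfolding tc_eq by blast
  then show ?thesis using proj_pt_eqD by blast
qed

lemma Gq_form:
  fixes A :: "'a::field^4^4"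
  assumes AG: "A \<in> Gq" and two: "(2::'a) \<noteq> 0" and three: "(3::'a) \<noteq> 0"
  shows "\<exists>a b c d \<kappa>. a*d - b*c \<noteq> 0 \<and> \<kappa> \<noteq> 0 \<and> (\<forall>z. A *v z = \<kappa> *s (Mb a b c d *v z))"
proof -
  have invA: "invertible A" using AG unfolding Gq_def by blast
  obtain c1 x1 y1 where h1: "c1 \<noteq> 0" "x1 \<noteq> 0 \<or> y1 \<noteq> 0" "A *v wv 1 0 = c1 *s wv x1 y1"
    using Gq_onC[OF AG, of 1 0] by auto
  obtain c2 x2 y2 where h2: "c2 \<noteq> 0" "x2 \<noteq> 0 \<or> y2 \<noteq> 0" "A *v wv 0 1 = c2 *s wv x2 y2"
    using Gq_onC[OF AG, of 0 1] by auto
  define \<Delta> where "\<Delta> = x1*y2 - x2*y1"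
  have D0: "\<Delta> \<noteq> 0"
  proof
    assume D: "\<Delta> = 0"
    obtain l where l: "wv x1 y1 = l *s wv x2 y2"
    proof (cases "x2 = 0")
      case True
      then have "y2 \<noteq> 0" using h2 by simp
      have "x1 = 0" using D True \<open>y2 \<noteq> 0\<close> unfolding \<Delta>_def by simp
      then have e: "x1 = (y1/y2)*x2" "y1 = (y1/y2)*y2" using True \<open>y2\<noteq>0\<close> by simp_all
      have "wv x1 y1 = (y1/y2)^3 *s wv x2 y2" by (subst e(1), subst e(2), rule wv_scale)
      then show ?thesis by (rule that)
    next
      case False
      have e: "x1 = (x1/x2)*x2" "y1 = (x1/x2)*y2" using D False unfolding \<Delta>_def
        by (simp_all add: field_simps)
      have "wv x1 y1 = (x1/x2)^3 *s wv x2 y2" by (subst e(1), subst e(2), rule wv_scale)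
      then show ?thesis by (rule that)
    qed
    have "A *v (c2 *s wv 1 0 - (c1*l) *s wv 0 1) = c2 *s (A *v wv 1 0) - (c1*l) *s (A *v wv 0 1)"
      by (simp add: matrix_vector_mult_diff_distrib vector_scalar_commute)
    also have "\<dots> = 0" using h1(3) h2(3) l by (simp add: vector_smult_assoc mult.commute mult.left_commute)
    finally have "c2 *s wv 1 0 - (c1*l) *s wv 0 1 = 0" using inv_inj[OF invA] by blast
    then have "(c2 *s wv 1 0 - (c1*l) *s wv 0 1)$1 = 0" by simp
    then show False using h2(1) by (simp add: wv_def)
  qed
  define N where "N = Mb y2 (-x2) y1 (-x1)"
  have Ninv: "invertible N" unfolding N_def using D0 unfolding \<Delta>_def
    by (intro Mb_invertible) (simp add: algebra_simps)
  define B where "B = N ** A"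
  have invB: "invertible B" unfolding B_def using Ninv invA by (rule invertible_mult)
  have Bz: "B *v z = N *v (A *v z)" for z by (simp add: B_def matrix_vector_mul_assoc)
  have Be0: "B *v vec4 1 0 0 0 = (c1*\<Delta>^3) *s vec4 1 0 0 0"
  proof -
    have "B *v vec4 1 0 0 0 = N *v (c1 *s wv x1 y1)" using h1(3) by (simp add: Bz wv_10[symmetric])
    also have "\<dots> = c1 *s wv \<Delta> 0" by (simp add: N_def vector_scalar_commute Mb_wv \<Delta>_def algebra_simps)
    also have "\<dots> = (c1*\<Delta>^3) *s vec4 1 0 0 0" unfolding vec_eq_iff forall_4 by (simp add: wv_def)
    finally show ?thesis .
  qed
  have Be3: "B *v vec4 0 0 0 1 = (c2*(-\<Delta>)^3) *s vec4 0 0 0 1"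
  proof -
    have "B *v vec4 0 0 0 1 = N *v (c2 *s wv x2 y2)" using h2(3) by (simp add: Bz wv_01[symmetric])
    also have "\<dots> = c2 *s wv 0 (-\<Delta>)" by (simp add: N_def vector_scalar_commute Mb_wv \<Delta>_def algebra_simps)
    also have "\<dots> = (c2*(-\<Delta>)^3) *s vec4 0 0 0 1" unfolding vec_eq_iff forall_4 by (simp add: wv_def)
    finally show ?thesis .
  qed
  have cone: "(B *v vec4 (t^3) (t^2) t 1)$2 * (B *v vec4 (t^3) (t^2) t 1)$4 = ((B *v vec4 (t^3) (t^2) t 1)$3)^2
              \<and> (B *v vec4 (t^3) (t^2) t 1)$1 * (B *v vec4 (t^3) (t^2) t 1)$3 = ((B *v vec4 (t^3) (t^2) t 1)$2)^2" for t
  proof -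
    obtain c x' y' where "A *v wv t 1 = c *s wv x' y'" using Gq_onC[OF AG, of t 1] by auto
    then have "B *v vec4 (t^3) (t^2) t 1 = c *s wv (y2*x' - x2*y') (y1*x' - x1*y')"
      by (simp add: Bz N_def vector_scalar_commute Mb_wv wv_t1[symmetric])
    then show ?thesis by (rule cone_wv)
  qed
  define \<delta> where "\<delta> = c2*(-\<Delta>)^3"
  have "\<exists>k. k \<noteq> 0 \<and> (\<forall>z. B *v z = (c2*(-\<Delta>)^3) *s (Mb k 0 0 1 *v z))"
    using diag_lemma[OF two three invB Be0 Be3 _ _ cone] h1(1) h2(1) D0 by auto
  then obtain k where k0: "k \<noteq> 0" and Bk: "\<And>z. B *v z = \<delta> *s (Mb k 0 0 1 *v z)"
    unfolding \<delta>_def by blast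
  have "A *v z = (\<delta> / (-\<Delta>)^3) *s (Mb (-x1*k) x2 (-y1*k) y2 *v z)" for z
  proof -
    define N' where "N' = Mb (-x1) x2 (-y1) y2"
    have NN: "N' ** N = Mb (-\<Delta>) 0 0 (-\<Delta>)" unfolding N'_def N_def Mb_mult \<Delta>_def
      by (simp add: algebra_simps)
    have NK: "N' ** Mb k 0 0 1 = Mb (-x1*k) x2 (-y1*k) y2" unfolding N'_def Mb_mult by simp
    have "N' *v (B *v z) = (N' ** N) *v (A *v z)" unfolding Bz by (rule matrix_vector_mul_assoc)
    also have "\<dots> = (-\<Delta>)^3 *s (A *v z)" by (simp only: NN Mb_scal)
    finally have "(-\<Delta>)^3 *s (A *v z) = N' *v (B *v z)" by simp
    also have "\<dots> = N' *v (\<delta> *s (Mb k 0 0 1 *v z))" by (simp only: Bk)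
    also have "\<dots> = \<delta> *s (N' *v (Mb k 0 0 1 *v z))" by (rule vector_scalar_commute)
    also have "\<dots> = \<delta> *s (Mb (-x1*k) x2 (-y1*k) y2 *v z)" by (simp only: matrix_vector_mul_assoc NK)
    finally have "(-\<Delta>)^3 *s (A *v z) = \<delta> *s (Mb (-x1*k) x2 (-y1*k) y2 *v z)" .
    then have e: "(-\<Delta>)^3 *s (A *v z) = \<delta> *s (Mb (-x1*k) x2 (-y1*k) y2 *v z)" .
    have m0: "(-\<Delta>)^3 \<noteq> 0" using D0 by simp
    have "A *v z = (1/(-\<Delta>)^3) *s ((-\<Delta>)^3 *s (A *v z))" using m0 by (simp only: vector_smult_assoc) simp
    also have "\<dots> = (1/(-\<Delta>)^3) *s (\<delta> *s (Mb (-x1*k) x2 (-y1*k) y2 *v z))" by (simp only: e)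
    also have "\<dots> = (\<delta> / (-\<Delta>)^3) *s (Mb (-x1*k) x2 (-y1*k) y2 *v z)" by (simp only: vector_smult_assoc) simp
    finally show ?thesis .
  qed
  moreover have "(-x1*k)*y2 - x2*(-y1*k) \<noteq> 0" using k0 D0 unfolding \<Delta>_def
    by (simp add: algebra_simps)
  moreover have "\<delta> / (-\<Delta>)^3 \<noteq> 0" using h2(1) D0 by (simp add: \<delta>_def)
  ultimately show ?thesis by blast
qed

(* ---- part T9 ---- *)
lemma mult_nz_cancel': "k \<noteq> 0 \<Longrightarrow> k * x = 0 \<Longrightarrow> x = (0::'a::field)" by simp

lemma alg_onlyif:
  fixes a b c d \<mu> :: "'a::field"
  assumes two: "(2::'a) \<noteq> 0" and three: "(3::'a) \<noteq> 0"
  and det: "a*d - b*c \<noteq> 0" and nsq: "\<not> (\<exists>x. x^2 = \<mu>)"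
  and E1: "a^3 + b^3 = a*c^2 + b*d^2"
  and E2: "a^2*c + b^2*d = \<mu>*(c^3 + d^3)"
  and E3: "3*a*b^2 = a*d^2 + 2*b*c*d"
  and E4: "b^2*c + 2*a*b*d = \<mu>*(3*c*d^2)"
  shows "\<mu> = -1/3 \<and> (\<exists>s::'a. s^2 = 3)"
proof -
  have a0: "a \<noteq> 0"
  proof
    assume a: "a = 0"
    then have "b \<noteq> 0" "c \<noteq> 0" using det by auto
    have "2*b*c*d = 0" using E3 a by simp
    then have "d = 0" using \<open>b\<noteq>0\<close> \<open>c\<noteq>0\<close> two by simp
    then have "b^3 = 0" using E1 a by simp
    then show False using \<open>b\<noteq>0\<close> by simp
  qed
  have c0: "c \<noteq> 0"
  proof
    assume c: "c = 0"
    then have "d \<noteq> 0" using det by auto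
    have "2*a*b*d = 0" using E4 c by simp
    then have "b = 0" using a0 \<open>d\<noteq>0\<close> two by simp
    then have "a^3 = 0" using E1 c by simp
    then show False using a0 by simp
  qed
  have b0: "b \<noteq> 0"
  proof
    assume b: "b = 0"
    then have "a*d^2 = 0" using E3 by simp
    then have "d = 0" using a0 by simp
    then show False using det b by simp
  qed
  have d0: "d \<noteq> 0"
  proof
    assume d: "d = 0"
    then have "3*a*b^2 = 0" using E3 by simp
    then show False using a0 b0 three by simp
  qed
  define B where "B = b/a"
  define K where "K = d/c"
  define Cc where "Cc = c/a"
  define C where "C = Cc^2"
  have B0: "B \<noteq> 0" and K0: "K \<noteq> 0" and Cc0: "Cc \<noteq> 0"
    using a0 b0 c0 d0 by (simp_all add: B_def K_def Cc_def)
  have i3: "a^3*(3*B^2 - C*(K^2+2*B*K)) = 3*a*b^2 - (a*d^2 + 2*b*c*d)"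
    using a0 c0 by (simp add: B_def K_def C_def Cc_def field_simps power2_eq_square power3_eq_cube)
  have i4: "a^2*c*(B^2 + 2*B*K - 3*\<mu>*K^2*C) = b^2*c + 2*a*b*d - \<mu>*(3*c*d^2)"
    using a0 c0 by (simp add: B_def K_def C_def Cc_def field_simps power2_eq_square power3_eq_cube)
  have i1: "a^3*(1 + B^3 - C*(1 + B*K^2)) = a^3 + b^3 - (a*c^2 + b*d^2)"
    using a0 c0 by (simp add: B_def K_def C_def Cc_def field_simps power2_eq_square power3_eq_cube)
  have i2: "a^2*c*(1 + B^2*K - \<mu>*C*(1+K^3)) = a^2*c + b^2*d - \<mu>*(c^3 + d^3)"
    using a0 c0 by (simp add: B_def K_def C_def Cc_def field_simps power2_eq_square power3_eq_cube)
  have h3: "3*B^2 = C*(K^2+2*B*K)" using i3 E3 a0 by simp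
  have h4: "B^2 + 2*B*K = 3*\<mu>*K^2*C" using i4 E4 a0 c0 by simp
  have h1: "1 + B^3 = C*(1 + B*K^2)" using i1 E1 a0 by simp
  have h2: "1 + B^2*K = \<mu>*C*(1+K^3)" using i2 E2 a0 c0 by simp
  have KB: "K \<noteq> B"
  proof
    assume KB: "K = B"
    have "3*B^2*1 = 3*B^2*C" using h3 KB by (simp add: power2_eq_square algebra_simps)
    then have C1: "C = 1" using B0 three by simp
    have "3*B^2*1 = 3*B^2*\<mu>" using h4 KB C1 by (simp add: power2_eq_square algebra_simps)
    then have "\<mu> = 1" using B0 three by simp
    then show False using nsq by (metis power_one)
  qed
  have K2B: "K + 2*B \<noteq> 0"
  proof
    assume "K + 2*B = 0"
    then have "K^2 + 2*B*K = 0" by (metis add.commute add_cancel_left_left mult.commute mult_zero_left power2_eq_square distrib_right)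
    then have "3*B^2 = 0" using h3 by simp
    then show False using B0 three by simp
  qed
  have s1: "(K^2+2*B*K)*(1+B^3) = 3*B^2*(1+B*K^2)" using h1 h3 by algebra
  have s1f: "(K-B)*(K+3*B-2*B^3*K) = 0" using s1 by algebra
  have F1: "K + 3*B = 2*B^3*K" using s1f KB by simp
  have s4: "B*K*((B+2*K)*(K+2*B)) = B*K*(9*\<mu>*K*B)" using h4 h3 by algebra
  have s4f: "(B+2*K)*(K+2*B) = 9*\<mu>*K*B" using s4 B0 K0 by simp
  have s2: "K*(K+2*B)*(1+B^2*K) = 3*\<mu>*B^2*(1+K^3)" using h2 h3 by algebra
  have "B*((K-B)*(K+2*B)*(3*K+B-2*B*K^3)) = 3*K*B*(K*(K+2*B)*(1+B^2*K) - 3*\<mu>*B^2*(1+K^3))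
      + B^2*(1+K^3)*(9*\<mu>*K*B - (B+2*K)*(K+2*B))" by algebra
  also have "\<dots> = 0" using s2 s4f by simp
  finally have "B*((K-B)*(K+2*B)*(3*K+B-2*B*K^3)) = 0" .
  then have s2f: "(K-B)*(K+2*B)*(3*K+B-2*B*K^3) = 0" using B0 by simp
  have F2: "3*K + B = 2*B*K^3" using s2f KB K2B by simp
  have "(K-B)*(K^2+4*B*K+B^2) = K^2*(K+3*B) - B^2*(3*K+B)" by algebra
  also have "\<dots> = K^2*(2*B^3*K) - B^2*(2*B*K^3)" using F1 F2 by simp
  also have "\<dots> = 0" by algebra
  finally have s5: "(K-B)*(K^2+4*B*K+B^2) = 0" .
  have Q: "K^2+4*B*K+B^2 = 0" using s5 KB by simp
  have "(3*(3*\<mu> + 1))*(K*B) = 0" using s4f Q by algebra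
  then have "3*(3*\<mu> + 1) = 0" using K0 B0 by simp
  then have "3*\<mu> + 1 = 0" by (rule mult_nz_cancel'[OF three])
  then have m3: "3*\<mu> = -1" by (simp add: eq_neg_iff_add_eq_0)
  have "\<mu> = (3*\<mu>)/3" using three by simp
  then have mu: "\<mu> = -1/3" using m3 by simp
  have "((B+2*K)/K)^2 = 3" using Q K0 by (simp add: field_simps power2_eq_square)
  then show ?thesis using mu by blast
qed

(* ---- part T10 ---- *)
lemma alg_if:
  fixes e r w k :: "'a::field"
  assumes two: "(2::'a) \<noteq> 0" and three: "(3::'a) \<noteq> 0"
  and s2: "e^2 = 3" and rr: "r^2 + 4*r + 1 = 0" and ww: "w^2 = 1 + 2*r"
  and kk: "2*r^3*k^3 = 1 + 3*r" and k0: "k \<noteq> 0" and w0: "w \<noteq> 0"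
  shows "w^3 + (r*k*w)^3 = w*(e*r)^2 + (r*k*w)*(k*e*r)^2"
    and "w^2*(e*r) + (r*k*w)^2*(k*e*r) = (-1/3)*((e*r)^3 + (k*e*r)^3)"
    and "3*w*(r*k*w)^2 = w*(k*e*r)^2 + 2*(r*k*w)*(e*r)*(k*e*r)"
    and "(r*k*w)^2*(e*r) + 2*w*(r*k*w)*(k*e*r) = (-1/3)*(3*(e*r)*(k*e*r)^2)"
    and "w*(k*e*r) - (r*k*w)*(e*r) \<noteq> 0"
    and "((e*r)^3+(k*e*r)^3)*(3*w*(r*k*w)^2) - (w^3+(r*k*w)^3)*(3*(e*r)*(k*e*r)^2) \<noteq> 0"
proof -
  have r0: "r \<noteq> 0" using rr by auto
  have s0: "e \<noteq> 0" using s2 three by auto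
  have six: "(6::'a) \<noteq> 0"
  proof -
    have "(6::'a) = 2*3" by simp
    moreover have "(2::'a)*3 \<noteq> 0" using two three by (metis mult_eq_0_iff)
    ultimately show ?thesis by metis
  qed
  have r1: "r \<noteq> 1"
  proof
    assume "r = 1" then have "(6::'a) = 0" using rr by simp
    then show False using six by blast
  qed
  have q2: "1 + 2*r \<noteq> 0" using ww w0 by auto
  have "2*(w^3 + (r*k*w)^3 - (w*(e*r)^2 + (r*k*w)*(k*e*r)^2)) =
     2*w*(1+r^3*k^3)*(w^2 - (1 + 2*r)) - 2*w*r^2*(1+r*k^3)*(e^2 - 3) + 2*w*(1-r)*((1 + 3*r) - 2*r^3*k^3)"
    by algebra
  also have "\<dots> = 0" using s2 ww kk by simp
  finally have "2*(w^3 + (r*k*w)^3 - (w*(e*r)^2 + (r*k*w)*(k*e*r)^2)) = 0" .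
  then have "w^3 + (r*k*w)^3 - (w*(e*r)^2 + (r*k*w)*(k*e*r)^2) = 0" by (rule mult_nz_cancel'[OF two])
  then show "w^3 + (r*k*w)^3 = w*(e*r)^2 + (r*k*w)*(k*e*r)^2" by simp
  have "3*(w^2*(e*r) + (r*k*w)^2*(k*e*r)) + ((e*r)^3 + (k*e*r)^3) =
      3*e*r*(w^2-(1+2*r))*(1+r^2*k^3) + e*r^3*(1+k^3)*(e^2-3) + 3*e*(1+r)*((r^2+4*r+1) + (2*r^3*k^3 - (1+3*r)))"
    by algebra
  also have "\<dots> = 0" using s2 rr ww kk by simp
  finally have "3*(w^2*(e*r) + (r*k*w)^2*(k*e*r)) = -((e*r)^3 + (k*e*r)^3)" by (rule eq_neg_iff_add_eq_0[THEN iffD2])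
  then show "w^2*(e*r) + (r*k*w)^2*(k*e*r) = (-1/3)*((e*r)^3 + (k*e*r)^3)" using three by (simp add: field_simps)
  have "3*w*(r*k*w)^2 - (w*(k*e*r)^2 + 2*(r*k*w)*(e*r)*(k*e*r)) = w*k^2*r^2*(3*(w^2 - (1+2*r)) - (1+2*r)*(e^2-3))"
    by algebra
  also have "\<dots> = 0" using s2 ww by simp
  finally show "3*w*(r*k*w)^2 = w*(k*e*r)^2 + 2*(r*k*w)*(e*r)*(k*e*r)" by simp
  have "(r*k*w)^2*(e*r) + 2*w*(r*k*w)*(k*e*r) + (e*r)*(k*e*r)^2 = e*r*k^2*((r^2+2*r)*(w^2-(1+2*r)) + r^2*(e^2-3) + 2*r*(r^2+4*r+1))"
    by algebra
  also have "\<dots> = 0" using s2 rr ww by simp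
  finally have "(r*k*w)^2*(e*r) + 2*w*(r*k*w)*(k*e*r) = -((e*r)*(k*e*r)^2)" by (rule eq_neg_iff_add_eq_0[THEN iffD2])
  then show "(r*k*w)^2*(e*r) + 2*w*(r*k*w)*(k*e*r) = (-1/3)*(3*(e*r)*(k*e*r)^2)" using three by (simp add: field_simps)
  have "w*(k*e*r) - (r*k*w)*(e*r) = w*k*e*r*(1-r)" by algebra
  then show "w*(k*e*r) - (r*k*w)*(e*r) \<noteq> 0" using w0 k0 s0 r0 r1 by simp
  have "2*r*(((e*r)^3+(k*e*r)^3)*(3*w*(r*k*w)^2) - (w^3+(r*k*w)^3)*(3*(e*r)*(k*e*r)^2)) =
     3*(e*r)^3*w^3*k^2*(1-r)*((1-r)*(1+2*r)) + 3*(e*r)^3*w^3*k^2*(1-r)*(2*r^3*k^3 - (1+3*r))"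
    by algebra
  also have "\<dots> = 3*(e*r)^3*w^3*k^2*(1-r)*((1-r)*(1+2*r))" using kk by simp
  finally have "2*r*(((e*r)^3+(k*e*r)^3)*(3*w*(r*k*w)^2) - (w^3+(r*k*w)^3)*(3*(e*r)*(k*e*r)^2)) = 3*(e*r)^3*w^3*k^2*(1-r)*((1-r)*(1+2*r))" .
  moreover have "3*(e*r)^3*w^3*k^2*(1-r)*((1-r)*(1+2*r)) \<noteq> 0"
    using three w0 k0 s0 r0 r1 q2 by simp
  ultimately show "((e*r)^3+(k*e*r)^3)*(3*w*(r*k*w)^2) - (w^3+(r*k*w)^3)*(3*(e*r)*(k*e*r)^2) \<noteq> 0" by (metis mult_zero_right)
qed

(* ---- part T11 ---- *)
lemma proj_line_change:
  fixes u v :: "'a::field^4"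
  assumes D: "\<alpha>*\<delta> - \<beta>*\<gamma> \<noteq> 0"
  shows "proj_line (\<alpha> *s u + \<beta> *s v) (\<gamma> *s u + \<delta> *s v) = proj_line u v"
  unfolding proj_line_def
proof (rule set_eqI, rule iffI)
  fix P :: "('a^4) set"
  assume "P \<in> {proj_pt (a *s (\<alpha> *s u + \<beta> *s v) + b *s (\<gamma> *s u + \<delta> *s v)) |a b. a \<noteq> 0 \<or> b \<noteq> 0}"
  then obtain a b where P: "P = proj_pt (a *s (\<alpha> *s u + \<beta> *s v) + b *s (\<gamma> *s u + \<delta> *s v))"
    and nz: "a \<noteq> 0 \<or> b \<noteq> 0" by blast
  have veq: "a *s (\<alpha> *s u + \<beta> *s v) + b *s (\<gamma> *s u + \<delta> *s v) = (a*\<alpha>+b*\<gamma>) *s u + (a*\<beta>+b*\<delta>) *s v"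
    by (simp add: vec_eq_iff algebra_simps)
  have nz2: "a*\<alpha>+b*\<gamma> \<noteq> 0 \<or> a*\<beta>+b*\<delta> \<noteq> 0"
  proof (rule ccontr)
    assume "\<not> ?thesis"
    then have z: "a*\<alpha>+b*\<gamma> = 0" "a*\<beta>+b*\<delta> = 0" by auto
    have "a*(\<alpha>*\<delta> - \<beta>*\<gamma>) = \<delta>*(a*\<alpha>+b*\<gamma>) - \<gamma>*(a*\<beta>+b*\<delta>)" by (simp add: algebra_simps)
    then have "a = 0" using z D by simp
    have "b*(\<alpha>*\<delta> - \<beta>*\<gamma>) = \<alpha>*(a*\<beta>+b*\<delta>) - \<beta>*(a*\<alpha>+b*\<gamma>)" by (simp add: algebra_simps)
    then have "b = 0" using z D by simp
    then show False using nz \<open>a = 0\<close> by simp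
  qed
  show "P \<in> {proj_pt (a *s u + b *s v) |a b. a \<noteq> 0 \<or> b \<noteq> 0}"
  proof -
    have "P = proj_pt ((a*\<alpha>+b*\<gamma>) *s u + (a*\<beta>+b*\<delta>) *s v)" using P veq by (simp only:)
    then show ?thesis using nz2 by blast
  qed
next
  fix P :: "('a^4) set"
  assume "P \<in> {proj_pt (a *s u + b *s v) |a b. a \<noteq> 0 \<or> b \<noteq> 0}"
  then obtain a' b' where P: "P = proj_pt (a' *s u + b' *s v)" and nz: "a' \<noteq> 0 \<or> b' \<noteq> 0" by blast
  define Dd where "Dd = \<alpha>*\<delta> - \<beta>*\<gamma>"
  have Dd: "Dd \<noteq> 0" using D Dd_def by simp
  define a where "a = (a'*\<delta> - b'*\<gamma>)/Dd"
  define b where "b = (b'*\<alpha> - a'*\<beta>)/Dd"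
  have c1: "a*\<alpha>+b*\<gamma> = a'" unfolding a_def b_def using Dd
    by (simp add: field_simps) (simp add: Dd_def algebra_simps)
  have c2: "a*\<beta>+b*\<delta> = b'" unfolding a_def b_def using Dd
    by (simp add: field_simps) (simp add: Dd_def algebra_simps)
  have veq: "a *s (\<alpha> *s u + \<beta> *s v) + b *s (\<gamma> *s u + \<delta> *s v) = (a*\<alpha>+b*\<gamma>) *s u + (a*\<beta>+b*\<delta>) *s v"
    by (simp add: vec_eq_iff algebra_simps)
  have nz2: "a \<noteq> 0 \<or> b \<noteq> 0" using c1 c2 nz by auto
  show "P \<in> {proj_pt (a *s (\<alpha> *s u + \<beta> *s v) + b *s (\<gamma> *s u + \<delta> *s v)) |a b. a \<noteq> 0 \<or> b \<noteq> 0}"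
  proof -
    have "P = proj_pt (a *s (\<alpha> *s u + \<beta> *s v) + b *s (\<gamma> *s u + \<delta> *s v))" using P veq c1 c2 by (simp only:)
    then show ?thesis using nz2 by blast
  qed
qed

lemma ell_pt:
  assumes "P \<in> proj_line (vec4 0 \<mu> 0 1) (vec4 1 0 1 (0::'a::field))" "z \<in> P"
  shows "z$1 = z$3 \<and> z$2 = \<mu> * z$4"
proof -
  obtain a b where "P = proj_pt (a *s vec4 0 \<mu> 0 1 + b *s vec4 1 0 1 0)"
    using assms(1) unfolding proj_line_def by blast
  then obtain c where "z = c *s (a *s vec4 0 \<mu> 0 1 + b *s vec4 1 0 1 0)"
    using assms(2) unfolding proj_pt_def by blast
  then show ?thesis by (simp add: algebra_simps)
qed

lemma nat_mod12: "(n::nat) mod 4 = 3 \<Longrightarrow> n mod 3 = 2 \<Longrightarrow> n mod 12 = 11"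
  by presburger

lemma mod12_4: "(n::nat) mod 12 = 11 \<Longrightarrow> n mod 4 = 3"
  by presburger

(* ---- part T12 ---- *)
theorem lemma7p4:
  fixes \<mu> :: "'a::{finite, field}"
  assumes "odd CARD('a)"
    and "CARD('a) mod 3 = 2"
    and "\<not> (\<exists>x::'a. x ^ 2 = \<mu>)"
  shows "same_orbit (proj_line (vec4 1 0 0 1) (vec4 0 0 1 (0::'a)))
                    (proj_line (vec4 0 \<mu> 0 1) (vec4 1 0 1 0))
         \<longleftrightarrow> (\<mu> = - 1 / 3 \<and> CARD('a) mod 12 = 11)"
proof -
  have two: "(2::'a) \<noteq> 0" using two_ne_zero_ff[OF assms(1)] .
  have three: "(3::'a) \<noteq> 0" using three_ne_zero_ff[OF assms(2) assms(1)] .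
  have nine: "(9::'a) \<noteq> 0"
  proof -
    have "(9::'a) = 3*3" by simp
    moreover have "(3::'a)*3 \<noteq> 0" using three by (metis mult_eq_0_iff)
    ultimately show ?thesis by metis
  qed
  let ?u = "vec4 1 0 0 (1::'a)" and ?v = "vec4 0 0 1 (0::'a)"
  let ?u' = "vec4 0 \<mu> 0 (1::'a)" and ?v' = "vec4 1 0 1 (0::'a)"
  have Mu: "Mb a b c d *v ?u = vec4 (a^3 + b^3) (a^2*c + b^2*d) (a*c^2 + b*d^2) (c^3 + d^3)" for a b c d :: 'a
    unfolding vec4_eq_iff mv4 by (simp add: Mb_def)
  have Mv: "Mb a b c d *v ?v = vec4 (3*a*b^2) (2*a*b*d + b^2*c) (a*d^2 + 2*b*c*d) (3*c*d^2)" for a b c d :: 'a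
    unfolding vec4_eq_iff mv4 by (simp add: Mb_def)
  show ?thesis
  proof
    assume "same_orbit (proj_line ?u ?v) (proj_line ?u' ?v')"
    then obtain A where AG: "A \<in> Gq" and AL: "proj_act A (proj_line ?u ?v) = proj_line ?u' ?v'"
      unfolding same_orbit_def by blast
    obtain a b c d \<kappa> where det: "a*d - b*c \<noteq> 0" and k0: "\<kappa> \<noteq> 0"
      and Af: "\<And>z. A *v z = \<kappa> *s (Mb a b c d *v z)"
      using Gq_form[OF AG two three] by blast
    have AL': "proj_line (A *v ?u) (A *v ?v) = proj_line ?u' ?v'" using AL by (simp only: proj_act_line)
    have "proj_pt (1 *s (A *v ?u) + 0 *s (A *v ?v)) \<in> proj_line (A *v ?u) (A *v ?v)"
      unfolding proj_line_def by (intro CollectI exI[of _ "1::'a"] exI[of _ "0::'a"]) simp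
    then have "proj_pt (A *v ?u) \<in> proj_line ?u' ?v'" using AL' by simp
    then have pu: "(A *v ?u)$1 = (A *v ?u)$3 \<and> (A *v ?u)$2 = \<mu> * (A *v ?u)$4"
      using ell_pt self_in_proj_pt by blast
    have "proj_pt (0 *s (A *v ?u) + 1 *s (A *v ?v)) \<in> proj_line (A *v ?u) (A *v ?v)"
      unfolding proj_line_def by (intro CollectI exI[of _ "0::'a"] exI[of _ "1::'a"]) simp
    then have "proj_pt (A *v ?v) \<in> proj_line ?u' ?v'" using AL' by simp
    then have pv: "(A *v ?v)$1 = (A *v ?v)$3 \<and> (A *v ?v)$2 = \<mu> * (A *v ?v)$4"
      using ell_pt self_in_proj_pt by blast
    have E1: "a^3 + b^3 = a*c^2 + b*d^2" using pu k0 by (simp add: Af Mu)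
    have E2: "a^2*c + b^2*d = \<mu>*(c^3 + d^3)" using pu k0 by (simp add: Af Mu)
    have E3: "3*a*b^2 = a*d^2 + 2*b*c*d" using pv k0 by (simp add: Af Mv)
    have E4': "2*a*b*d + b^2*c = \<mu>*(3*c*d^2)" using pv k0 by (simp add: Af Mv)
    have E4: "b^2*c + 2*a*b*d = \<mu>*(3*c*d^2)" using E4' by (simp only: add.commute)
    obtain e :: 'a where mu: "\<mu> = -1/3" and e: "e^2 = 3"
      using alg_onlyif[OF two three det assms(3) E1 E2 E3 E4] by blast
    have "CARD('a) mod 4 = 3"
    proof (rule neg1_nonsq_mod4[OF assms(1)])
      show "\<not> (\<exists>y::'a. y^2 = -1)"
      proof
        assume "\<exists>y::'a. y^2 = -1"
        then obtain y :: 'a where y: "y^2 = -1" by blast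
        have "(e*y/3)^2 = \<mu>" using e y three nine mu by (simp add: power_mult_distrib power_divide)
        then show False using assms(3) by blast
      qed
    qed
    then show "\<mu> = - 1 / 3 \<and> CARD('a) mod 12 = 11" using mu nat_mod12 assms(2) by simp
  next
    assume "\<mu> = - 1 / 3 \<and> CARD('a) mod 12 = 11"
    then have mu: "\<mu> = -1/3" and m12: "CARD('a) mod 12 = 11" by auto
    have n1: "\<not> (\<exists>y::'a. y^2 = -1)" using mod4_neg1_nonsq[OF assms(1) mod12_4[OF m12]] .
    have n3: "\<not> (\<exists>y::'a. y^2 = -3)"
    proof
      assume "\<exists>y::'a. y^2 = -3"
      then obtain y :: 'a where y: "y^2 = -3" by blast
      have "(y/3)^2 = \<mu>" using y three nine mu by (simp add: power_divide power2_eq_square)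
      then show False using assms(3) by blast
    qed
    obtain e :: 'a where e: "e^2 = 3" using nonsq_mult[OF assms(1) n1 n3] by auto
    have rw: "\<exists>r w::'a. r^2 + 4*r + 1 = 0 \<and> w^2 = 1 + 2*r"
    proof (rule ccontr)
      assume nrw: "\<not> ?thesis"
      have r1: "(-2+e)^2 + 4*(-2+e) + 1 = 0" using e by (simp add: power2_eq_square algebra_simps)
      have r2: "(-2-e)^2 + 4*(-2-e) + 1 = 0" using e by (simp add: power2_eq_square algebra_simps)
      have "\<not> (\<exists>w. w^2 = 1 + 2*(-2+e))" using nrw r1 by blast
      moreover have "\<not> (\<exists>w. w^2 = 1 + 2*(-2-e))" using nrw r2 by blast
      ultimately obtain y where "y^2 = (1 + 2*(-2+e)) * (1 + 2*(-2-e))"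
        using nonsq_mult[OF assms(1)] by blast
      moreover have "(1 + 2*(-2+e)) * (1 + 2*(-2-e)) = -3"
      proof -
        have "(1 + 2*(-2+e)) * (1 + 2*(-2-e)) = 9 - 4*e^2" by algebra
        then show ?thesis using e by simp
      qed
      ultimately show False using n3 by auto
    qed
    then obtain r w :: 'a where rr: "r^2 + 4*r + 1 = 0" and ww: "w^2 = 1 + 2*r" by blast
    have r0: "r \<noteq> 0" using rr by auto
    have w0: "w \<noteq> 0"
    proof
      assume "w = 0"
      then have h: "1 + 2*r = 0" using ww by simp
      have "4*(r^2 + 4*r + 1) = (1+2*r)^2 + 6*(1+2*r) - 3" by (simp add: power2_eq_square algebra_simps)
      then have "(0::'a) = - 3" using rr h by simp
      then show False using three by simp
    qed
    have q3: "1 + 3*r \<noteq> 0"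
    proof
      assume h: "1 + 3*r = 0"
      have "9*(r^2 + 4*r + 1) = (1+3*r)^2 + 10*(1+3*r) - 2" by (simp add: power2_eq_square algebra_simps)
      then have "(0::'a) = - 2" using rr h by simp
      then show False using two by simp
    qed
    obtain k :: 'a where kc: "k^3 = (1 + 3*r)/(2*r^3)" using cube_root_ff[OF assms(2)] by blast
    have kk: "2*r^3*k^3 = 1 + 3*r" using kc r0 two by simp
    have k0: "k \<noteq> 0" using kk q3 by auto
    note AI = alg_if[OF two three e rr ww kk k0 w0]
    let ?a = w and ?b = "r*k*w" and ?c = "e*r" and ?d = "k*e*r"
    have MG: "Mb ?a ?b ?c ?d \<in> Gq" using Mb_in_Gq[OF AI(5)] .
    have mu_eq: "Mb ?a ?b ?c ?d *v ?u = (?c^3 + ?d^3) *s ?u' + (?a^3 + ?b^3) *s ?v'"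
      unfolding Mu vec_eq_iff forall_4 using AI(1) AI(2) mu by (simp add: algebra_simps)
    have mv_eq: "Mb ?a ?b ?c ?d *v ?v = (3*?c*?d^2) *s ?u' + (3*?a*?b^2) *s ?v'"
      unfolding Mv vec_eq_iff forall_4 using AI(3) AI(4) mu by (simp add: algebra_simps)
    have "proj_act (Mb ?a ?b ?c ?d) (proj_line ?u ?v) = proj_line ?u' ?v'"
      unfolding proj_act_line mu_eq mv_eq by (rule proj_line_change[OF AI(6)])
    then show "same_orbit (proj_line ?u ?v) (proj_line ?u' ?v')"
      unfolding same_orbit_def using MG by blast
  qed
qed

end
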